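(* Let $(H,B_1,B_2)$ be a Rota-Baxter system of Hopf algebras with descendent Hopf algebra $H_{B_1,B_2}$. Then $B_1$ and $B_2$ (restricted to $H_1$) are Hopf algebra homomorphisms from $H_{B_1,B_2}$ to $H$. Moreover, $\operatorname{Im}(B_1)$ and $\operatorname{Im}(B_2)$ are Hopf subalgebras of $H$.
   Context: $\mathbb{F}$ is a field of characteristic $0$; Sweedler notation $\Delta(a)=a_1\otimes a_2$. A Rota-Baxter system of Hopf algebras is a triple $(H,B_1,B_2)$ where $(H,\cdot,1,\Delta,\epsilon,S)$ is a cocommutative Hopf algebra and $B_1,B_2:H\to H$ are coalgebra homomorphisms with $B_1(1)=B_2(1)=1$ such that for all $a,b\in H$: $B_1(a)B_1(b)=B_1(B_1(a_1)bS(B_2(a_2)))$ and $B_2(a)B_2(b)=B_2(B_1(a_1)bS(B_2(a_2)))$. Descendent operation $a\circ b=B_1(a_1)bS(B_2(a_2))$, cocycle $\sigma(a)=B_1(a_1)S(B_2(a_2))$, $H_1=\operatorname{Im}(\sigma)$. The descendent Hopf algebra $H_{B_1,B_2}$ is $H_1$ with product $\circ$, unit $1$, coproduct and counit the restrictions of $\Delta,\epsilon$, and antipode $T(a)=S(B_1(a_1))B_2(a_2)$. *)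

theory Defs
  imports Complex_Main
begin

(* Tensors in H (x) H are represented by finite lists of pairs [(x_i,y_i)] standing for
   sum_i x_i (x) y_i.  Two such representatives denote the same tensor iff every
   bilinear form H x H -> k takes the same value on them (H(x)H embeds into its double
   dual), similarly for H(x)H(x)H with trilinear forms.  The coproduct is a map
   Delta :: 'h => ('h * 'h) list choosing a representative of Delta(a). *)

definition sw :: "('h \<Rightarrow> 'h \<Rightarrow> 'c::comm_monoid_add) \<Rightarrow> ('h \<times> 'h) list \<Rightarrow> 'c" where
  "sw f t = (\<Sum>(x, y)\<leftarrow>t. f x y)"

definition bilin :: "('k::field \<Rightarrow> 'h::ab_group_add \<Rightarrow> 'h) \<Rightarrow> ('h \<Rightarrow> 'h \<Rightarrow> 'k) \<Rightarrow> bool" where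
  "bilin sc \<beta> \<longleftrightarrow> (\<forall>y. Vector_Spaces.linear sc (*) (\<lambda>x. \<beta> x y)) \<and> (\<forall>x. Vector_Spaces.linear sc (*) (\<beta> x))"

definition trilin :: "('k::field \<Rightarrow> 'h::ab_group_add \<Rightarrow> 'h) \<Rightarrow> ('h \<Rightarrow> 'h \<Rightarrow> 'h \<Rightarrow> 'k) \<Rightarrow> bool" where
  "trilin sc \<tau> \<longleftrightarrow> (\<forall>y z. Vector_Spaces.linear sc (*) (\<lambda>x. \<tau> x y z))
     \<and> (\<forall>x z. Vector_Spaces.linear sc (*) (\<lambda>y. \<tau> x y z))
     \<and> (\<forall>x y. Vector_Spaces.linear sc (*) (\<lambda>z. \<tau> x y z))"

definition tensor_eq :: "('k::field \<Rightarrow> 'h::ab_group_add \<Rightarrow> 'h) \<Rightarrow> ('h \<times> 'h) list \<Rightarrow> ('h \<times> 'h) list \<Rightarrow> bool" where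
  "tensor_eq sc t u \<longleftrightarrow> (\<forall>\<beta>. bilin sc \<beta> \<longrightarrow> sw \<beta> t = sw \<beta> u)"

definition cocomm_hopf_algebra ::
  "('k::field \<Rightarrow> 'h::ring_1 \<Rightarrow> 'h) \<Rightarrow> ('h \<Rightarrow> ('h \<times> 'h) list) \<Rightarrow> ('h \<Rightarrow> 'k) \<Rightarrow> ('h \<Rightarrow> 'h) \<Rightarrow> bool" where
  "cocomm_hopf_algebra sc \<Delta> \<epsilon> S \<longleftrightarrow>
     \<comment> \<open>algebra\<close>
     vector_space sc \<and>
     (\<forall>c a b. sc c (a * b) = sc c a * b \<and> sc c (a * b) = a * sc c b) \<and>
     \<comment> \<open>coproduct: linear, coassociative, multiplicative, unital\<close>
     (\<forall>c a b. tensor_eq sc (\<Delta> (sc c a + b))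
        (map (\<lambda>(x, y). (sc c x, y)) (\<Delta> a) @ \<Delta> b)) \<and>
     (\<forall>a \<tau>. trilin sc \<tau> \<longrightarrow>
        sw (\<lambda>x y. sw (\<lambda>x' y'. \<tau> x' y' y) (\<Delta> x)) (\<Delta> a)
      = sw (\<lambda>x y. sw (\<lambda>x' y'. \<tau> x x' y') (\<Delta> y)) (\<Delta> a)) \<and>
     (\<forall>a b. tensor_eq sc (\<Delta> (a * b))
        (concat (map (\<lambda>(x, y). map (\<lambda>(x', y'). (x * x', y * y')) (\<Delta> b)) (\<Delta> a)))) \<and>
     tensor_eq sc (\<Delta> 1) [(1, 1)] \<and>
     \<comment> \<open>counit: linear, counit axioms, multiplicative, unital\<close>
     Vector_Spaces.linear sc (*) \<epsilon> \<and>
     (\<forall>a. sw (\<lambda>x y. sc (\<epsilon> x) y) (\<Delta> a) = a \<and> sw (\<lambda>x y. sc (\<epsilon> y) x) (\<Delta> a) = a) \<and>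
     (\<forall>a b. \<epsilon> (a * b) = \<epsilon> a * \<epsilon> b) \<and> \<epsilon> 1 = 1 \<and>
     \<comment> \<open>antipode\<close>
     Vector_Spaces.linear sc sc S \<and>
     (\<forall>a. sw (\<lambda>x y. S x * y) (\<Delta> a) = sc (\<epsilon> a) 1 \<and> sw (\<lambda>x y. x * S y) (\<Delta> a) = sc (\<epsilon> a) 1) \<and>
     \<comment> \<open>cocommutativity\<close>
     (\<forall>a. tensor_eq sc (\<Delta> a) (map (\<lambda>(x, y). (y, x)) (\<Delta> a)))"

definition coalg_hom :: "('k::field \<Rightarrow> 'h::ring_1 \<Rightarrow> 'h) \<Rightarrow> ('h \<Rightarrow> ('h \<times> 'h) list) \<Rightarrow> ('h \<Rightarrow> 'k) \<Rightarrow> ('h \<Rightarrow> 'h) \<Rightarrow> bool" where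
  "coalg_hom sc \<Delta> \<epsilon> B \<longleftrightarrow> Vector_Spaces.linear sc sc B \<and>
     (\<forall>a. tensor_eq sc (\<Delta> (B a)) (map (\<lambda>(x, y). (B x, B y)) (\<Delta> a))) \<and>
     (\<forall>a. \<epsilon> (B a) = \<epsilon> a)"

definition rota_baxter_system ::
  "('k::field \<Rightarrow> 'h::ring_1 \<Rightarrow> 'h) \<Rightarrow> ('h \<Rightarrow> ('h \<times> 'h) list) \<Rightarrow> ('h \<Rightarrow> 'k) \<Rightarrow> ('h \<Rightarrow> 'h) \<Rightarrow> ('h \<Rightarrow> 'h) \<Rightarrow> ('h \<Rightarrow> 'h) \<Rightarrow> bool" where
  "rota_baxter_system sc \<Delta> \<epsilon> S B1 B2 \<longleftrightarrow> cocomm_hopf_algebra sc \<Delta> \<epsilon> S \<and>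
     coalg_hom sc \<Delta> \<epsilon> B1 \<and> coalg_hom sc \<Delta> \<epsilon> B2 \<and> B1 1 = 1 \<and> B2 1 = 1 \<and>
     (\<forall>a b. B1 a * B1 b = B1 (sw (\<lambda>x y. B1 x * b * S (B2 y)) (\<Delta> a))) \<and>
     (\<forall>a b. B2 a * B2 b = B2 (sw (\<lambda>x y. B1 x * b * S (B2 y)) (\<Delta> a)))"

text \<open>Descendent operation, cocycle, and H_1 = Im(sigma).\<close>
definition desc_op :: "('h::ring_1 \<Rightarrow> ('h \<times> 'h) list) \<Rightarrow> ('h \<Rightarrow> 'h) \<Rightarrow> ('h \<Rightarrow> 'h) \<Rightarrow> ('h \<Rightarrow> 'h) \<Rightarrow> 'h \<Rightarrow> 'h \<Rightarrow> 'h" where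
  "desc_op \<Delta> S B1 B2 a b = sw (\<lambda>x y. B1 x * b * S (B2 y)) (\<Delta> a)"

definition cocycle :: "('h::ring_1 \<Rightarrow> ('h \<times> 'h) list) \<Rightarrow> ('h \<Rightarrow> 'h) \<Rightarrow> ('h \<Rightarrow> 'h) \<Rightarrow> ('h \<Rightarrow> 'h) \<Rightarrow> 'h \<Rightarrow> 'h" where
  "cocycle \<Delta> S B1 B2 a = sw (\<lambda>x y. B1 x * S (B2 y)) (\<Delta> a)"

definition desc_carrier :: "('h::ring_1 \<Rightarrow> ('h \<times> 'h) list) \<Rightarrow> ('h \<Rightarrow> 'h) \<Rightarrow> ('h \<Rightarrow> 'h) \<Rightarrow> ('h \<Rightarrow> 'h) \<Rightarrow> 'h set" where
  "desc_carrier \<Delta> S B1 B2 = range (cocycle \<Delta> S B1 B2)"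

text \<open>Hopf algebra homomorphism f from (A, mA, uA, DeltaA, epsA) to (H, *, 1, Delta, eps),
  i.e. a linear map on A which is an algebra and a coalgebra homomorphism (bialgebra map;
  compatibility with the antipodes is then automatic).  The structure maps of the source
  are given as maps on the ambient space, and the carrier A is a subspace.\<close>
definition hopf_hom_on ::
  "('k::field \<Rightarrow> 'h::ring_1 \<Rightarrow> 'h) \<Rightarrow> 'h set \<Rightarrow> ('h \<Rightarrow> 'h \<Rightarrow> 'h) \<Rightarrow> 'h \<Rightarrow> ('h \<Rightarrow> ('h \<times> 'h) list) \<Rightarrow> ('h \<Rightarrow> 'k)
    \<Rightarrow> ('h \<Rightarrow> ('h \<times> 'h) list) \<Rightarrow> ('h \<Rightarrow> 'k) \<Rightarrow> ('h \<Rightarrow> 'h) \<Rightarrow> bool" where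
  "hopf_hom_on sc A mA uA \<Delta>A \<epsilon>A \<Delta> \<epsilon> f \<longleftrightarrow>
     (\<forall>c. \<forall>a\<in>A. \<forall>b\<in>A. f (sc c a + b) = sc c (f a) + f b) \<and>
     (\<forall>a\<in>A. \<forall>b\<in>A. f (mA a b) = f a * f b) \<and>
     f uA = 1 \<and>
     (\<forall>a\<in>A. tensor_eq sc (\<Delta> (f a)) (map (\<lambda>(x, y). (f x, f y)) (\<Delta>A a))) \<and>
     (\<forall>a\<in>A. \<epsilon> (f a) = \<epsilon>A a)"

definition hopf_subalgebra ::
  "('k::field \<Rightarrow> 'h::ring_1 \<Rightarrow> 'h) \<Rightarrow> ('h \<Rightarrow> ('h \<times> 'h) list) \<Rightarrow> ('h \<Rightarrow> 'h) \<Rightarrow> 'h set \<Rightarrow> bool" where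
  "hopf_subalgebra sc \<Delta> S C \<longleftrightarrow> module.subspace sc C \<and> 1 \<in> C \<and>
     (\<forall>a\<in>C. \<forall>b\<in>C. a * b \<in> C) \<and>
     (\<forall>a\<in>C. \<exists>t. set t \<subseteq> C \<times> C \<and> tensor_eq sc (\<Delta> a) t) \<and>
     (\<forall>a\<in>C. S a \<in> C)"

end

theory Submission
  imports Defs
begin

lemma sw_Nil[simp]: "sw f [] = 0" by (simp add: sw_def)
lemma sw_Cons[simp]: "sw f ((x,y)#t) = f x y + sw f t" by (simp add: sw_def)
lemma sw_append[simp]: "sw f (t @ u) = sw f t + sw f u" by (simp add: sw_def)

lemma sw_cong: "(\<And>x y. (x, y) \<in> set t \<Longrightarrow> f x y = g x y) \<Longrightarrow> sw f t = sw g t"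
  by (induction t) auto

lemma sw_swap: "sw f (map (\<lambda>(x, y). (y, x)) t) = sw (\<lambda>x y. f y x) t"
  by (induction t) auto

lemma sw_map2: "sw f (map (\<lambda>(x, y). (B x, B y)) t) = sw (\<lambda>x y. f (B x) (B y)) t"
  by (induction t) auto

lemma lin_sw:
  assumes "Vector_Spaces.linear s1 s2 L"
  shows "L (sw f t) = sw (\<lambda>x y. L (f x y)) t"
proof -
  interpret Vector_Spaces.linear s1 s2 L by fact
  show ?thesis by (induction t) (auto simp: add)
qed

lemma vs_field: "vector_space ((*) :: 'k::field \<Rightarrow> 'k \<Rightarrow> 'k)"
  by unfold_locales (auto simp: algebra_simps)

lemma sep:
  fixes sc :: "'k::field \<Rightarrow> 'h::ab_group_add \<Rightarrow> 'h"
  assumes vs: "vector_space sc" and eq: "\<And>\<phi>. Vector_Spaces.linear sc (*) \<phi> \<Longrightarrow> \<phi> u = \<phi> v"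
  shows "u = v"
proof (rule ccontr)
  assume ne: "u \<noteq> v"
  interpret p: vector_space_pair sc "(*) :: 'k \<Rightarrow> 'k \<Rightarrow> 'k"
    using vs vs_field by (simp add: vector_space_pair_def)
  have "p.vs1.independent {u - v}"
    using ne by (intro p.vs1.independent_insertI) (auto simp: p.vs1.independent_empty)
  then obtain g where g: "Vector_Spaces.linear sc (*) g" "g (u - v) = 1"
    using p.linear_independent_extend[of "{u - v}" "\<lambda>_. 1"] by auto
  interpret Vector_Spaces.linear sc "(*)" g by fact
  from eq[OF g(1)] g(2) show False by (simp add: diff)
qed

locale HA =
  fixes sc :: "'k::field \<Rightarrow> 'h::ring_1 \<Rightarrow> 'h"
    and \<Delta> :: "'h \<Rightarrow> ('h \<times> 'h) list" and \<epsilon> :: "'h \<Rightarrow> 'k" and S :: "'h \<Rightarrow> 'h"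
  assumes hopf: "cocomm_hopf_algebra sc \<Delta> \<epsilon> S"
begin

abbreviation lin where "lin f \<equiv> Vector_Spaces.linear sc sc f"
definition bil where "bil f \<longleftrightarrow> (\<forall>y. lin (\<lambda>x. f x y)) \<and> (\<forall>x. lin (f x))"
definition tri where "tri f \<longleftrightarrow> (\<forall>y z. lin (\<lambda>x. f x y z)) \<and> (\<forall>x z. lin (\<lambda>y. f x y z)) \<and> (\<forall>x y. lin (\<lambda>z. f x y z))"

lemma vs: "vector_space sc" using hopf by (simp add: cocomm_hopf_algebra_def)
sublocale V: vector_space sc by (rule vs)
lemma scm1: "sc c (a * b) = sc c a * b" using hopf by (simp add: cocomm_hopf_algebra_def)
lemma scm2: "sc c (a * b) = a * sc c b" using hopf unfolding cocomm_hopf_algebra_def by blast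
lemma Dlin: "tensor_eq sc (\<Delta> (sc c a + b)) (map (\<lambda>(x, y). (sc c x, y)) (\<Delta> a) @ \<Delta> b)"
  using hopf by (simp add: cocomm_hopf_algebra_def)
lemma coassoc: "trilin sc \<tau> \<Longrightarrow> sw (\<lambda>x y. sw (\<lambda>x' y'. \<tau> x' y' y) (\<Delta> x)) (\<Delta> a)
      = sw (\<lambda>x y. sw (\<lambda>x' y'. \<tau> x x' y') (\<Delta> y)) (\<Delta> a)"
  using hopf by (simp add: cocomm_hopf_algebra_def)
lemma eps_lin: "Vector_Spaces.linear sc (*) \<epsilon>" using hopf by (simp add: cocomm_hopf_algebra_def)
lemma counit1: "sw (\<lambda>x y. sc (\<epsilon> x) y) (\<Delta> a) = a" using hopf by (simp add: cocomm_hopf_algebra_def)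
lemma counit2: "sw (\<lambda>x y. sc (\<epsilon> y) x) (\<Delta> a) = a" using hopf by (simp add: cocomm_hopf_algebra_def)
lemma S_lin: "lin S" using hopf by (simp add: cocomm_hopf_algebra_def)
lemma anti1: "sw (\<lambda>x y. S x * y) (\<Delta> a) = sc (\<epsilon> a) 1" using hopf by (simp add: cocomm_hopf_algebra_def)
lemma anti2: "sw (\<lambda>x y. x * S y) (\<Delta> a) = sc (\<epsilon> a) 1" using hopf by (simp add: cocomm_hopf_algebra_def)
lemma cocomm: "tensor_eq sc (\<Delta> a) (map (\<lambda>(x, y). (y, x)) (\<Delta> a))"
  using hopf by (simp add: cocomm_hopf_algebra_def)

lemma lin_I: "(\<And>x y. f (x + y) = f x + f y) \<Longrightarrow> (\<And>c x. f (sc c x) = sc c (f x)) \<Longrightarrow> lin f"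
  using vs by (simp add: Vector_Spaces.linear_iff)

lemma lin_add: "lin f \<Longrightarrow> f (x + y) = f x + f y" by (simp add: Vector_Spaces.linear_iff)
lemma lin_scale: "lin f \<Longrightarrow> f (sc c x) = sc c (f x)" by (simp add: Vector_Spaces.linear_iff)

lemma lin_mr: "lin (\<lambda>x. x * v)"
  by (rule lin_I) (auto simp: distrib_right scm1)
lemma lin_ml: "lin (\<lambda>x. v * x)"
  by (rule lin_I) (auto simp: distrib_left scm2)
lemma lin_comp: "lin f \<Longrightarrow> lin g \<Longrightarrow> lin (\<lambda>x. g (f x))"
  using Vector_Spaces.linear_compose[of sc sc f sc g] by (simp add: o_def)

lemma bil_transfer:
  assumes "tensor_eq sc t u" "bil f"
  shows "sw f t = sw f u"
proof (rule sep[OF vs])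
  fix \<phi> assume \<phi>: "Vector_Spaces.linear sc (*) \<phi>"
  have "bilin sc (\<lambda>x y. \<phi> (f x y))"
    using assms(2) \<phi> unfolding bilin_def bil_def
    using Vector_Spaces.linear_compose[of sc sc _ "(*)" \<phi>] by (auto simp: o_def)
  then show "\<phi> (sw f t) = \<phi> (sw f u)"
    using assms(1) unfolding tensor_eq_def lin_sw[OF \<phi>] by blast
qed

lemma tri_transfer:
  assumes "tri f"
  shows "sw (\<lambda>x y. sw (\<lambda>x' y'. f x' y' y) (\<Delta> x)) (\<Delta> a)
      = sw (\<lambda>x y. sw (\<lambda>x' y'. f x x' y') (\<Delta> y)) (\<Delta> a)"
proof (rule sep[OF vs])
  fix \<phi> assume \<phi>: "Vector_Spaces.linear sc (*) \<phi>"
  have "trilin sc (\<lambda>x y z. \<phi> (f x y z))"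
    using assms \<phi> unfolding trilin_def tri_def
    using Vector_Spaces.linear_compose[of sc sc _ "(*)" \<phi>] by (auto simp: o_def)
  from coassoc[OF this, of a] show "\<phi> (sw (\<lambda>x y. sw (\<lambda>x' y'. f x' y' y) (\<Delta> x)) (\<Delta> a)) =
         \<phi> (sw (\<lambda>x y. sw (\<lambda>x' y'. f x x' y') (\<Delta> y)) (\<Delta> a))"
    unfolding lin_sw[OF \<phi>] by simp
qed

lemma cocomm_sw: "bil f \<Longrightarrow> sw f (\<Delta> a) = sw (\<lambda>x y. f y x) (\<Delta> a)"
  using bil_transfer[OF cocomm] sw_swap by metis

lemma sw_scale_map: "(\<And>x y. f (sc c x) y = sc c (f x y)) \<Longrightarrow>
   sw f (map (\<lambda>(x, y). (sc c x, y)) t) = sc c (sw f t)"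
proof (induction t)
  case Nil then show ?case using V.scale_zero_right by simp
next
  case (Cons p t) then show ?case
    by (cases p) (simp add: V.scale_right_distrib)
qed

lemma Dsw_lin:
  assumes "bil f" shows "lin (\<lambda>a. sw f (\<Delta> a))"
proof -
  have sc_f: "f (sc c x) y = sc c (f x y)" for c x y
  proof -
    have "lin (\<lambda>x. f x y)" using assms unfolding bil_def by blast
    from lin_scale[OF this] show ?thesis by simp
  qed
  have key: "sw f (\<Delta> (sc c a + b)) = sc c (sw f (\<Delta> a)) + sw f (\<Delta> b)" for c a b
    using bil_transfer[OF Dlin assms] sw_scale_map[of f, OF sc_f] by simp
  have z: "sw f (\<Delta> 0) = 0"
    using key[of 1 0 0] V.scale_one by simp
  show ?thesis
  proof (rule lin_I)
    fix x y show "sw f (\<Delta> (x + y)) = sw f (\<Delta> x) + sw f (\<Delta> y)"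
      using key[of 1 x y] V.scale_one by simp
  next
    fix c x show "sw f (\<Delta> (sc c x)) = sc c (sw f (\<Delta> x))"
      using key[of c x 0] z by simp
  qed
qed

lemma coalg_transfer:
  assumes "coalg_hom sc \<Delta> \<epsilon> B" "bil f"
  shows "sw f (\<Delta> (B a)) = sw (\<lambda>x y. f (B x) (B y)) (\<Delta> a)"
  using bil_transfer[OF _ assms(2)] assms(1) sw_map2 unfolding coalg_hom_def by metis


definition conv where "conv f g a = sw (\<lambda>x y. f x * g y) (\<Delta> a)"
definition eta where "eta a = sc (\<epsilon> a) 1"

lemma bil_prod: "lin f \<Longrightarrow> lin g \<Longrightarrow> bil (\<lambda>x y. f x * g y)"
  unfolding bil_def
proof (intro conjI allI)
  fix x y assume "lin f" "lin g"
  show "lin (\<lambda>x. f x * g y)" using lin_comp[OF \<open>lin f\<close> lin_mr] .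
  show "lin (\<lambda>y. f x * g y)" using lin_comp[OF \<open>lin g\<close> lin_ml] .
qed

lemma conv_lin: "lin f \<Longrightarrow> lin g \<Longrightarrow> lin (conv f g)"
  unfolding conv_def[abs_def] by (rule Dsw_lin[OF bil_prod])

lemma eta_lin: "lin eta"
proof (rule lin_I)
  interpret E: Vector_Spaces.linear sc "(*)" \<epsilon> by (rule eps_lin)
  fix x y c
  show "eta (x + y) = eta x + eta y" by (simp add: eta_def E.add V.scale_left_distrib)
  show "eta (sc c x) = sc c (eta x)" by (simp add: eta_def E.scale)
qed

lemma conv_assoc:
  assumes f: "lin f" and g: "lin g" and h: "lin h"
  shows "conv (conv f g) h a = conv f (conv g h) a"
proof -
  have "conv (conv f g) h a = sw (\<lambda>x y. sw (\<lambda>x' y'. f x' * g y' * h y) (\<Delta> x)) (\<Delta> a)"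
    unfolding conv_def lin_sw[OF lin_mr] ..
  also have "\<dots> = sw (\<lambda>x y. sw (\<lambda>x' y'. f x * g x' * h y') (\<Delta> y)) (\<Delta> a)"
  proof (rule tri_transfer, unfold tri_def, intro conjI allI)
    fix x y z
    show "lin (\<lambda>x. f x * g y * h z)" using lin_comp[OF f lin_mr] by (simp add: mult.assoc)
    show "lin (\<lambda>y. f x * g y * h z)" using lin_comp[OF lin_comp[OF g lin_mr] lin_ml] by (simp add: mult.assoc)
    show "lin (\<lambda>z. f x * g y * h z)" using lin_comp[OF h lin_ml] .
  qed
  also have "\<dots> = conv f (conv g h) a"
    unfolding conv_def lin_sw[OF lin_ml] by (simp add: mult.assoc)
  finally show ?thesis .
qed

lemma conv_eta_right: "lin f \<Longrightarrow> conv f eta a = f a"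
proof -
  assume f: "lin f"
  have "conv f eta a = sw (\<lambda>x y. f (sc (\<epsilon> y) x)) (\<Delta> a)"
    unfolding conv_def eta_def by (simp add: lin_scale[OF f] scm2[symmetric])
  also have "\<dots> = f a" unfolding lin_sw[OF f, symmetric] counit2 ..
  finally show ?thesis .
qed

lemma conv_eta_left: "lin f \<Longrightarrow> conv eta f a = f a"
proof -
  assume f: "lin f"
  have "conv eta f a = sw (\<lambda>x y. f (sc (\<epsilon> x) y)) (\<Delta> a)"
    unfolding conv_def eta_def by (simp add: lin_scale[OF f] scm1[symmetric])
  also have "\<dots> = f a" unfolding lin_sw[OF f, symmetric] counit1 ..
  finally show ?thesis .
qed

lemma coalg_lin: "coalg_hom sc \<Delta> \<epsilon> B \<Longrightarrow> lin B" by (simp add: coalg_hom_def)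

lemma conv_B_SB: assumes B: "coalg_hom sc \<Delta> \<epsilon> B" shows "conv B (\<lambda>x. S (B x)) a = eta a"
proof -
  have "conv B (\<lambda>x. S (B x)) a = sw (\<lambda>x y. x * S y) (\<Delta> (B a))"
    unfolding conv_def by (rule coalg_transfer[OF B bil_prod[OF V.linear_id S_lin], symmetric, simplified])
  also have "\<dots> = eta a" using B by (simp add: anti2 eta_def coalg_hom_def)
  finally show ?thesis .
qed

lemma conv_SB_B: assumes B: "coalg_hom sc \<Delta> \<epsilon> B" shows "conv (\<lambda>x. S (B x)) B a = eta a"
proof -
  have "conv (\<lambda>x. S (B x)) B a = sw (\<lambda>x y. S x * y) (\<Delta> (B a))"
    unfolding conv_def by (rule coalg_transfer[OF B bil_prod[OF S_lin V.linear_id], symmetric, simplified])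
  also have "\<dots> = eta a" using B by (simp add: anti1 eta_def coalg_hom_def)
  finally show ?thesis .
qed


lemma S_range:
  assumes B1: "coalg_hom sc \<Delta> \<epsilon> B1" and B2: "coalg_hom sc \<Delta> \<epsilon> B2"
    and B: "coalg_hom sc \<Delta> \<epsilon> B" and B_one: "B 1 = 1"
    and RB: "\<And>u v. B u * B v = B (sw (\<lambda>x y. B1 x * v * S (B2 y)) (\<Delta> u))"
  shows "S (B a) = B (conv (\<lambda>x. S (B1 x)) B2 a)"
proof -
  define c where "c = conv (\<lambda>x. S (B1 x)) B2"
  have l1: "lin B1" and l2: "lin B2" and lB: "lin B" using B1 B2 B by (simp_all add: coalg_lin)
  have lSB1: "lin (\<lambda>x. S (B1 x))" using lin_comp[OF l1 S_lin] .
  have lSB2: "lin (\<lambda>x. S (B2 x))" using lin_comp[OF l2 S_lin] .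
  have lSB: "lin (\<lambda>x. S (B x))" using lin_comp[OF lB S_lin] .
  have lc: "lin c" unfolding c_def using conv_lin[OF lSB1 l2] .
  have lBc: "lin (\<lambda>x. B (c x))" using lin_comp[OF lc lB] .
  have cS: "conv c (\<lambda>x. S (B2 x)) = (\<lambda>x. S (B1 x))"
  proof
    fix a
    have "conv c (\<lambda>x. S (B2 x)) a = conv (\<lambda>x. S (B1 x)) (conv B2 (\<lambda>x. S (B2 x))) a"
      unfolding c_def by (rule conv_assoc[OF lSB1 l2 lSB2])
    also have "conv B2 (\<lambda>x. S (B2 x)) = eta" using conv_B_SB[OF B2] by auto
    also have "conv (\<lambda>x. S (B1 x)) eta a = S (B1 a)" by (rule conv_eta_right[OF lSB1])
    finally show "conv c (\<lambda>x. S (B2 x)) a = S (B1 a)" .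
  qed
  have X: "sw (\<lambda>x y. sw (\<lambda>x' y'. B1 x' * c y * S (B2 y')) (\<Delta> x)) (\<Delta> a) = eta a" for a
  proof -
    have "sw (\<lambda>x y. sw (\<lambda>x' y'. B1 x' * c y * S (B2 y')) (\<Delta> x)) (\<Delta> a)
       = sw (\<lambda>x y. sw (\<lambda>x' y'. B1 x * c y' * S (B2 x')) (\<Delta> y)) (\<Delta> a)"
    proof (rule tri_transfer[where f = "\<lambda>x y z. B1 x * c z * S (B2 y)"], unfold tri_def, intro conjI allI)
      fix x y z
      show "lin (\<lambda>x. B1 x * c z * S (B2 y))" using lin_comp[OF l1 lin_mr] by (simp add: mult.assoc)
      show "lin (\<lambda>y. B1 x * c z * S (B2 y))" using lin_comp[OF lSB2 lin_ml] .
      show "lin (\<lambda>z. B1 x * c z * S (B2 y))" using lin_comp[OF lc lin_ml] lin_comp[OF lin_comp[OF lc lin_mr] lin_ml]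
        by (simp add: mult.assoc)
    qed
    also have "\<dots> = sw (\<lambda>x y. sw (\<lambda>x' y'. B1 x * c x' * S (B2 y')) (\<Delta> y)) (\<Delta> a)"
    proof (rule sw_cong)
      fix x y
      have "bil (\<lambda>x' y'. B1 x * c x' * S (B2 y'))"
        using bil_prod[OF lin_comp[OF lc lin_ml] lSB2] by (simp add: mult.assoc)
      from cocomm_sw[OF this, of y]
      show "sw (\<lambda>x' y'. B1 x * c y' * S (B2 x')) (\<Delta> y) = sw (\<lambda>x' y'. B1 x * c x' * S (B2 y')) (\<Delta> y)"
        by simp
    qed
    also have "\<dots> = conv B1 (conv c (\<lambda>x. S (B2 x))) a"
      unfolding conv_def[of B1] unfolding conv_def lin_sw[OF lin_ml] by (simp add: mult.assoc)
    also have "\<dots> = eta a" unfolding cS by (rule conv_B_SB[OF B1])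
    finally show ?thesis .
  qed
  have BBc: "conv B (\<lambda>x. B (c x)) = eta"
  proof
    fix a
    have "conv B (\<lambda>x. B (c x)) a = sw (\<lambda>x y. B (sw (\<lambda>x' y'. B1 x' * c y * S (B2 y')) (\<Delta> x))) (\<Delta> a)"
      unfolding conv_def RB ..
    also have "\<dots> = B (eta a)" unfolding lin_sw[OF lB, symmetric] X ..
    also have "\<dots> = eta a" by (simp add: eta_def lin_scale[OF lB] B_one)
    finally show "conv B (\<lambda>x. B (c x)) a = eta a" .
  qed
  have "S (B a) = conv (\<lambda>x. S (B x)) eta a" by (rule conv_eta_right[OF lSB, symmetric])
  also have "\<dots> = conv (\<lambda>x. S (B x)) (conv B (\<lambda>x. B (c x))) a" unfolding BBc ..
  also have "\<dots> = conv (conv (\<lambda>x. S (B x)) B) (\<lambda>x. B (c x)) a" by (rule conv_assoc[OF lSB lB lBc, symmetric])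
  also have "conv (\<lambda>x. S (B x)) B = eta" using conv_SB_B[OF B] by auto
  also have "conv eta (\<lambda>x. B (c x)) a = B (c a)" by (rule conv_eta_left[OF lBc])
  finally show ?thesis unfolding c_def .
qed

end

lemma hom_part:
  assumes H: "cocomm_hopf_algebra sc \<Delta> \<epsilon> S" and B: "coalg_hom sc \<Delta> \<epsilon> B" and B1: "B 1 = 1"
    and RB: "\<forall>a b. B a * B b = B (sw (\<lambda>x y. B1 x * b * S (B2 y)) (\<Delta> a))"
  shows "hopf_hom_on sc A (desc_op \<Delta> S B1 B2) 1 \<Delta> \<epsilon> \<Delta> \<epsilon> B"
proof -
  interpret HA sc \<Delta> \<epsilon> S by unfold_locales (rule H)
  have lB: "lin B" using B by (rule coalg_lin)
  show ?thesis unfolding hopf_hom_on_def desc_op_def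
    using B B1 RB by (auto simp: lin_add[OF lB] lin_scale[OF lB] coalg_hom_def)
qed

lemma sub_part:
  assumes H: "cocomm_hopf_algebra sc \<Delta> \<epsilon> S"
    and B1: "coalg_hom sc \<Delta> \<epsilon> B1" and B2: "coalg_hom sc \<Delta> \<epsilon> B2"
    and B: "coalg_hom sc \<Delta> \<epsilon> B" and B_one: "B 1 = 1"
    and RB: "\<forall>a b. B a * B b = B (sw (\<lambda>x y. B1 x * b * S (B2 y)) (\<Delta> a))"
  shows "hopf_subalgebra sc \<Delta> S (range B)"
proof -
  interpret HA sc \<Delta> \<epsilon> S by unfold_locales (rule H)
  have lB: "lin B" using B by (rule coalg_lin)
  have sub: "module.subspace sc (range B)"
    unfolding V.subspace_def
  proof (intro conjI ballI allI)
    show "0 \<in> range B" using Vector_Spaces.linear.axioms(3)[OF lB] module_hom.zero by (metis rangeI)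
    fix x y c assume "x \<in> range B" "y \<in> range B"
    then obtain u v where "x = B u" "y = B v" by auto
    then show "x + y \<in> range B" "sc c x \<in> range B"
      by (metis lin_add[OF lB] rangeI, metis lin_scale[OF lB] rangeI)
  qed
  have mul: "\<forall>a\<in>range B. \<forall>b\<in>range B. a * b \<in> range B" using RB by auto
  have cop: "\<forall>a\<in>range B. \<exists>t. set t \<subseteq> range B \<times> range B \<and> tensor_eq sc (\<Delta> a) t"
  proof
    fix a assume "a \<in> range B"
    then obtain u where u: "a = B u" by auto
    show "\<exists>t. set t \<subseteq> range B \<times> range B \<and> tensor_eq sc (\<Delta> a) t"
      by (rule exI[of _ "map (\<lambda>(x, y). (B x, B y)) (\<Delta> u)"]) (use B u in \<open>auto simp: coalg_hom_def\<close>)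
  qed
  have ant: "\<forall>a\<in>range B. S a \<in> range B"
    using S_range[OF B1 B2 B B_one] RB by auto
  show ?thesis unfolding hopf_subalgebra_def using sub B_one mul cop ant by auto
qed

theorem mainTheorem10:
  fixes sc :: "'k::field_char_0 \<Rightarrow> 'h::ring_1 \<Rightarrow> 'h"
    and \<Delta> :: "'h \<Rightarrow> ('h \<times> 'h) list" and \<epsilon> :: "'h \<Rightarrow> 'k"
    and S B1 B2 :: "'h \<Rightarrow> 'h"
  assumes "rota_baxter_system sc \<Delta> \<epsilon> S B1 B2"
  shows "hopf_hom_on sc (desc_carrier \<Delta> S B1 B2) (desc_op \<Delta> S B1 B2) 1 \<Delta> \<epsilon> \<Delta> \<epsilon> B1
    \<and> hopf_hom_on sc (desc_carrier \<Delta> S B1 B2) (desc_op \<Delta> S B1 B2) 1 \<Delta> \<epsilon> \<Delta> \<epsilon> B2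
    \<and> hopf_subalgebra sc \<Delta> S (range B1)
    \<and> hopf_subalgebra sc \<Delta> S (range B2)"
proof -
  note R = assms[unfolded rota_baxter_system_def]
  have h: "cocomm_hopf_algebra sc \<Delta> \<epsilon> S" and c1: "coalg_hom sc \<Delta> \<epsilon> B1" and c2: "coalg_hom sc \<Delta> \<epsilon> B2"
    and o1: "B1 1 = 1" and o2: "B2 1 = 1"
    and r1: "\<forall>a b. B1 a * B1 b = B1 (sw (\<lambda>x y. B1 x * b * S (B2 y)) (\<Delta> a))"
    and r2: "\<forall>a b. B2 a * B2 b = B2 (sw (\<lambda>x y. B1 x * b * S (B2 y)) (\<Delta> a))"
    using R by blast+
  show ?thesis
    using hom_part[OF h c1 o1 r1] hom_part[OF h c2 o2 r2]
      sub_part[OF h c1 c2 c1 o1 r1] sub_part[OF h c1 c2 c2 o2 r2] by blast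
qed

end
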